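(* Let $T$ and $\tilde T$ be positive integers, $\theta>0$ a firing threshold, and $\psi\in\mathbb{R}$ a shift. Consider a single neuron of the $l$-th layer whose input currents over $T$ time-steps form a vector $\mathbf{I}=(I^{1},\dots,I^{T})^{\top}\in\mathbb{R}^{T}$ with average $z=\frac{1}{T}\sum_{t=1}^{T}I^{t}$ (so $z$ plays the role of $\mathbf{W}^l\mathbf{r}^{(l-1),T}$). Define the parallel conversion matrix $\mathbf{\Lambda}_{\mathrm{pc}}\in\mathbb{R}^{T\times T}$ by $(\mathbf{\Lambda}_{\mathrm{pc}})_{x,j}=\frac{1}{T-x+1}$ for all $x,j\in\{1,\dots,T\}$, and the shift vector $$\mathbf{b}=\Big[\tfrac{\psi}{T},\ \dots,\ \tfrac{\psi}{T-x+1},\ \dots,\ \psi\Big]^{\top}\in\mathbb{R}^{T},\qquad b_x=\frac{\psi}{T-x+1}.$$ The parallel spike output is $\mathbf{s}\in\{0,1\}^{T}$ with $s_x=1$ if $(\mathbf{\Lambda}_{\mathrm{pc}}\mathbf{I}+\mathbf{b})_x\ge\theta$ and $s_x=0$ otherwise, and the SNN average firing rate is $r^{T}=\frac{\theta}{T}\sum_{x=1}^{T}s_x$. For a positive integer $N$ define the QCFS output $$r_{\mathrm{QCFS}}^{N}(z)=\frac{\theta}{N}\,\mathrm{Clip}\!\Big(\Big\lfloor\frac{zN+\psi}{\theta}\Big\rfloor,0,N\Big),$$ where $\mathrm{Clip}(a,0,N)=\min(\max(a,0),N)$. Then: (i) If $\tilde T=T$, then $r^{T}=r_{\mathrm{QCFS}}^{\tilde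 T}(z)$ for every input $\mathbf{I}\in\mathbb{R}^T$. (ii) If $\tilde T\neq T$ and $\psi=\theta/2$, and $z$ is a random variable uniformly distributed on $[0,\theta]$ (with $\mathbf{I}$ any input vector with average $z$), then $\mathbb{E}\big(r^{T}-r_{\mathrm{QCFS}}^{\tilde T}(z)\big)=0$.
   Context: In the converted spiking network, each spiking neuron layer computes all $T$ time-steps at once ("parallel inference"): the vector of membrane values is $\mathbf{\Lambda}_{\mathrm{pc}}\mathbf{I}+\mathbf{b}$ and a spike is emitted at step $x$ exactly when the $x$-th entry reaches the threshold $\theta$; there is no reset phase. The QCFS (Quantization-Clip-Floor-Shift) function with $N$ quantization levels is the ANN activation $r_{\mathrm{QCFS}}^{N}$ defined in the claim, applied to the pre-activation $z$. All statements are per neuron (elementwise for a layer). *)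

theory Defs
  imports "HOL-Probability.Probability"
begin

text \<open>Vectors in R^T are functions nat => real indexed by 1..T.\<close>

definition Lambda_pc :: "nat \<Rightarrow> nat \<Rightarrow> nat \<Rightarrow> real" where
  "Lambda_pc T x j = 1 / (real T - real x + 1)"

definition shift_vec :: "nat \<Rightarrow> real \<Rightarrow> nat \<Rightarrow> real" where
  "shift_vec T \<psi> x = \<psi> / (real T - real x + 1)"

definition membrane :: "nat \<Rightarrow> real \<Rightarrow> (nat \<Rightarrow> real) \<Rightarrow> nat \<Rightarrow> real" where
  "membrane T \<psi> I x = (\<Sum>j=1..T. Lambda_pc T x j * I j) + shift_vec T \<psi> x"

definition spike :: "nat \<Rightarrow> real \<Rightarrow> real \<Rightarrow> (nat \<Rightarrow> real) \<Rightarrow> nat \<Rightarrow> real" where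
  "spike T \<theta> \<psi> I x = (if membrane T \<psi> I x \<ge> \<theta> then 1 else 0)"

definition snn_rate :: "nat \<Rightarrow> real \<Rightarrow> real \<Rightarrow> (nat \<Rightarrow> real) \<Rightarrow> real" where
  "snn_rate T \<theta> \<psi> I = \<theta> / real T * (\<Sum>x=1..T. spike T \<theta> \<psi> I x)"

definition avg_input :: "nat \<Rightarrow> (nat \<Rightarrow> real) \<Rightarrow> real" where
  "avg_input T I = (\<Sum>t=1..T. I t) / real T"

definition clip :: "int \<Rightarrow> int \<Rightarrow> int \<Rightarrow> int" where
  "clip a lo hi = min (max a lo) hi"

definition qcfs :: "nat \<Rightarrow> real \<Rightarrow> real \<Rightarrow> real \<Rightarrow> real" where
  "qcfs N \<theta> \<psi> z = \<theta> / real N * real_of_int (clip \<lfloor>(z * real N + \<psi>) / \<theta>\<rfloor> 0 (int N))"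

end

theory Submission
  imports Defs
begin

lemma membrane_eq:
  assumes "x \<le> T"
  shows "membrane T \<psi> I x = ((\<Sum>j=1..T. I j) + \<psi>) / (real T - real x + 1)"
  unfolding membrane_def Lambda_pc_def shift_vec_def
  by (simp add: sum_divide_distrib[symmetric] add_divide_distrib)

lemma part1:
  assumes T: "T > 0" and th: "\<theta> > 0"
  shows "snn_rate T \<theta> \<psi> I = qcfs T \<theta> \<psi> (avg_input T I)"
proof -
  define S where "S = (\<Sum>j=1..T. I j)"
  define a where "a = (S + \<psi>) / \<theta>"
  define m where "m = nat (clip \<lfloor>a\<rfloor> 0 (int T))"
  have z: "(avg_input T I * real T + \<psi>) / \<theta> = a"
    using T unfolding avg_input_def a_def S_def by simp
  have sp: "spike T \<theta> \<psi> I x = (if int T + 1 - \<lfloor>a\<rfloor> \<le> int x then 1 else 0)" if "x \<in> {1..T}" for x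
  proof -
    have d: "real T - real x + 1 > 0" using that by auto
    have "membrane T \<psi> I x \<ge> \<theta> \<longleftrightarrow> \<theta> * (real T - real x + 1) \<le> S + \<psi>"
      using that d by (simp add: membrane_eq S_def pos_le_divide_eq mult.commute)
    also have "\<dots> \<longleftrightarrow> real T - real x + 1 \<le> a"
      unfolding a_def using th by (simp add: pos_le_divide_eq mult.commute)
    also have "\<dots> \<longleftrightarrow> of_int (int T - int x + 1) \<le> a" using that by simp
    also have "\<dots> \<longleftrightarrow> int T - int x + 1 \<le> \<lfloor>a\<rfloor>" by (rule le_floor_iff[symmetric])
    also have "\<dots> \<longleftrightarrow> int T + 1 - \<lfloor>a\<rfloor> \<le> int x" by linarith
    finally show ?thesis unfolding spike_def by simp
  qed
  have "(\<Sum>x=1..T. spike T \<theta> \<psi> I x) = (\<Sum>x=1..T. if int T + 1 - \<lfloor>a\<rfloor> \<le> int x then 1 else 0)"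
    by (rule sum.cong) (simp_all add: sp)
  also have "\<dots> = real (card {x\<in>{1..T}. int T + 1 - \<lfloor>a\<rfloor> \<le> int x})"
    by (simp add: sum.If_cases Int_def conj_commute)
  also have "{x\<in>{1..T}. int T + 1 - \<lfloor>a\<rfloor> \<le> int x} = {T + 1 - m..T}"
    unfolding m_def clip_def by auto
  also have "card {T + 1 - m..T} = m" unfolding m_def clip_def by auto
  finally have "(\<Sum>x=1..T. spike T \<theta> \<psi> I x) = real m" .
  moreover have "real m = real_of_int (clip \<lfloor>a\<rfloor> 0 (int T))"
    unfolding m_def clip_def by simp
  ultimately show ?thesis unfolding snn_rate_def qcfs_def z by simp
qed

lemma qcfs_meas[measurable]: "qcfs N \<theta> \<psi> \<in> borel_measurable borel"
  unfolding qcfs_def clip_def by measurable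

lemma qcfs_bound:
  assumes "\<theta> > 0" "N > 0"
  shows "\<bar>qcfs N \<theta> \<psi> z\<bar> \<le> \<theta>"
proof -
  have "0 \<le> clip \<lfloor>(z * real N + \<psi>) / \<theta>\<rfloor> 0 (int N)" "clip \<lfloor>(z * real N + \<psi>) / \<theta>\<rfloor> 0 (int N) \<le> int N"
    unfolding clip_def by auto
  then have "0 \<le> real_of_int (clip \<lfloor>(z * real N + \<psi>) / \<theta>\<rfloor> 0 (int N))"
     "real_of_int (clip \<lfloor>(z * real N + \<psi>) / \<theta>\<rfloor> 0 (int N)) \<le> real N"
    by linarith+
  then show ?thesis using assms unfolding qcfs_def
    by (auto simp: abs_mult field_simps)
qed

lemma qcfs_sym:
  assumes th: "\<theta> > 0" and N: "N > 0" and z: "0 \<le> z" "z \<le> \<theta>"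
    and ne: "z \<notin> range (\<lambda>k::int. \<theta> * (of_int k - 1/2) / real N)"
  shows "qcfs N \<theta> (\<theta>/2) z + qcfs N \<theta> (\<theta>/2) (\<theta> - z) = \<theta>"
proof -
  define a where "a = real N * z / \<theta> + 1/2"
  have e1: "(z * real N + \<theta>/2) / \<theta> = a" using th by (simp add: a_def field_simps)
  have e2: "((\<theta> - z) * real N + \<theta>/2) / \<theta> = real N + 1 - a" using th by (simp add: a_def field_simps)
  have nint: "a \<noteq> of_int k" for k
  proof
    assume "a = of_int k"
    then have "z = \<theta> * (of_int k - 1/2) / real N" using th N unfolding a_def by (simp add: field_simps)
    with ne show False by auto
  qed
  have a0: "a \<ge> 1/2" "a \<le> real N + 1/2" using th z unfolding a_def
    by (auto simp: field_simps intro!: mult_right_mono)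
  have fa: "\<lfloor>real N + 1 - a\<rfloor> = int N - \<lfloor>a\<rfloor>"
  proof -
    have "\<lfloor>real N + 1 - a\<rfloor> = int N + 1 + \<lfloor>- a\<rfloor>"
      by (metis add.commute diff_conv_add_uminus floor_add_int of_int_1 of_int_add of_int_of_nat_eq)
    moreover have "\<lfloor>- a\<rfloor> = - \<lfloor>a\<rfloor> - 1"
    proof -
      have "of_int \<lfloor>a\<rfloor> < a" using nint[of "\<lfloor>a\<rfloor>"] of_int_floor_le[of a] by linarith
      then show ?thesis by (intro floor_unique) linarith+
    qed
    ultimately show ?thesis by simp
  qed
  have c1: "clip \<lfloor>a\<rfloor> 0 (int N) = \<lfloor>a\<rfloor>" using a0 unfolding clip_def by linarith
  have c2: "clip (int N - \<lfloor>a\<rfloor>) 0 (int N) = int N - \<lfloor>a\<rfloor>" using a0 unfolding clip_def by linarith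
  show ?thesis unfolding qcfs_def e1 e2 fa c1 c2 using N
    by (simp add: field_simps)
qed

lemma uniform_eq:
  assumes th: "\<theta> > 0"
  shows "uniform_measure lborel {0..\<theta>} = density lborel (\<lambda>x. ennreal (indicator {0..\<theta>} x / \<theta>))"
  unfolding uniform_measure_def using th
  by (intro arg_cong[where f="density lborel"] ext)
     (auto simp: divide_ennreal split: split_indicator intro: divide_ennreal[of 1 \<theta>, simplified])

lemma qcfs_integral:
  assumes th: "\<theta> > 0" and N: "N > 0"
  shows "integral\<^sup>L (uniform_measure lborel {0..\<theta>}) (qcfs N \<theta> (\<theta>/2)) = \<theta>/2"
proof -
  let ?q = "qcfs N \<theta> (\<theta>/2)"
  let ?A = "{0..\<theta>} :: real set"
  let ?E = "range (\<lambda>k::int. \<theta> * (of_int k - 1/2) / real N)"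
  define J where "J = (\<integral>x. indicator ?A x * ?q x \<partial>lborel)"
  have int1: "integrable lborel (\<lambda>x. indicator ?A x * ?q x)"
    using integrableI_bounded_set_indicator[of ?A lborel ?q \<theta>] qcfs_bound[OF th N] th
    by (simp add: emeasure_lborel_Icc)
  have mq2: "(\<lambda>x. ?q (\<theta> - x)) \<in> borel_measurable lborel" by measurable
  have int2: "integrable lborel (\<lambda>x. indicator ?A x * ?q (\<theta> - x))"
    using integrableI_bounded_set_indicator[of ?A lborel "\<lambda>x. ?q (\<theta> - x)" \<theta>] qcfs_bound[OF th N] mq2 th
    by (simp add: emeasure_lborel_Icc)
  have "J = (\<integral>x. indicator ?A (\<theta> + (-1) * x) * ?q (\<theta> + (-1) * x) \<partial>lborel)"
    unfolding J_def by (subst lborel_integral_real_affine[where c="-1" and t=\<theta>]) auto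
  also have "\<dots> = (\<integral>x. indicator ?A x * ?q (\<theta> - x) \<partial>lborel)"
    by (intro Bochner_Integration.integral_cong) (auto split: split_indicator)
  finally have J2: "J = (\<integral>x. indicator ?A x * ?q (\<theta> - x) \<partial>lborel)" .
  have "J + J = (\<integral>x. indicator ?A x * ?q x + indicator ?A x * ?q (\<theta> - x) \<partial>lborel)"
    apply (subst Bochner_Integration.integral_add[OF int1 int2])
    using J2 unfolding J_def by simp
  also have "\<dots> = (\<integral>x. \<theta> * indicator ?A x \<partial>lborel)"
  proof (rule integral_cong_AE)
    have ae: "AE x in lborel. x \<notin> ?E"
      by (rule AE_not_in[OF countable_imp_null_set_lborel]) simp
    have aux: "x \<notin> ?E \<longrightarrow> indicator ?A x * ?q x + indicator ?A x * ?q (\<theta> - x) = \<theta> * indicator ?A x" for x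
      using qcfs_sym[OF th N, of x] by (auto split: split_indicator simp: algebra_simps)
    show "AE x in lborel. indicator ?A x * ?q x + indicator ?A x * ?q (\<theta> - x) = \<theta> * indicator ?A x"
      by (rule AE_mp[OF ae AE_I2]) (rule aux)
  next
    show "(\<lambda>x. indicator ?A x * ?q x + indicator ?A x * ?q (\<theta> - x)) \<in> borel_measurable lborel"
      using mq2 by measurable
  next
    show "(\<lambda>x. \<theta> * indicator ?A x) \<in> borel_measurable lborel" by measurable
  qed
  also have "\<dots> = \<theta> * \<theta>" using th by simp
  finally have JJ: "J = \<theta> * \<theta> / 2" by simp
  have "integral\<^sup>L (uniform_measure lborel {0..\<theta>}) ?q = (\<integral>x. (indicator ?A x / \<theta>) * ?q x \<partial>lborel)"
    unfolding uniform_eq[OF th]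
    using th by (subst integral_density) (auto intro!: AE_I2)
  also have "\<dots> = J / \<theta>"
    unfolding J_def by (subst integral_divide_zero[symmetric]) (auto intro!: Bochner_Integration.integral_cong)
  finally show ?thesis using JJ th by simp
qed

lemma qcfs_integrable:
  assumes th: "\<theta> > 0" and N: "N > 0"
  shows "integrable (uniform_measure lborel {0..\<theta>}) (qcfs N \<theta> \<psi>)"
proof -
  have "integrable lborel (\<lambda>x. indicator {0..\<theta>} x *\<^sub>R (qcfs N \<theta> \<psi> x / \<theta>))"
    using integrableI_bounded_set_indicator[of "{0..\<theta>}" lborel "\<lambda>x. qcfs N \<theta> \<psi> x / \<theta>" 1]
      qcfs_bound[OF th N] th
    by (simp add: emeasure_lborel_Icc)
  then have "integrable lborel (\<lambda>x. (indicator {0..\<theta>} x / \<theta>) *\<^sub>R qcfs N \<theta> \<psi> x)"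
    by (rule Bochner_Integration.integrable_cong[THEN iffD1, rotated -1]) auto
  then show ?thesis
    unfolding uniform_eq[OF th] using th
    by (subst integrable_density) (auto intro!: AE_I2)
qed

theorem theorem4p1:
  fixes T Tt :: nat and \<theta> \<psi> :: real
    and M :: "'a measure" and Z :: "'a \<Rightarrow> real" and Ivec :: "'a \<Rightarrow> nat \<Rightarrow> real"
  assumes "T > 0" and "Tt > 0" and "\<theta> > 0"
  shows "(Tt = T \<longrightarrow>
           (\<forall>I. snn_rate T \<theta> \<psi> I = qcfs Tt \<theta> \<psi> (avg_input T I)))
       \<and> ((Tt \<noteq> T \<and> \<psi> = \<theta> / 2 \<and> prob_space M \<and> Z \<in> borel_measurable M
           \<and> distr M lborel Z = uniform_measure lborel {0..\<theta>}
           \<and> (\<forall>\<omega>\<in>space M. avg_input T (Ivec \<omega>) = Z \<omega>)) \<longrightarrow>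
           prob_space.expectation M
             (\<lambda>\<omega>. snn_rate T \<theta> \<psi> (Ivec \<omega>) - qcfs Tt \<theta> \<psi> (Z \<omega>)) = 0)"
proof (intro conjI impI allI)
  fix I assume "Tt = T"
  then show "snn_rate T \<theta> \<psi> I = qcfs Tt \<theta> \<psi> (avg_input T I)"
    using part1[OF assms(1,3)] by simp
next
  assume H: "Tt \<noteq> T \<and> \<psi> = \<theta> / 2 \<and> prob_space M \<and> Z \<in> borel_measurable M
           \<and> distr M lborel Z = uniform_measure lborel {0..\<theta>}
           \<and> (\<forall>\<omega>\<in>space M. avg_input T (Ivec \<omega>) = Z \<omega>)"
  then have psi: "\<psi> = \<theta> / 2" and ps: "prob_space M" and Zm: "Z \<in> borel_measurable M"
    and D: "distr M lborel Z = uniform_measure lborel {0..\<theta>}"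
    and avg: "\<forall>\<omega>\<in>space M. avg_input T (Ivec \<omega>) = Z \<omega>" by auto
  interpret prob_space M by (rule ps)
  define g where "g z = qcfs T \<theta> \<psi> z - qcfs Tt \<theta> \<psi> z" for z
  have gm: "g \<in> borel_measurable lborel" unfolding g_def by measurable
  have Zm': "Z \<in> measurable M lborel" using Zm by simp
  have "expectation (\<lambda>\<omega>. snn_rate T \<theta> \<psi> (Ivec \<omega>) - qcfs Tt \<theta> \<psi> (Z \<omega>))
        = expectation (\<lambda>\<omega>. g (Z \<omega>))"
    using avg part1[OF assms(1,3)] unfolding g_def
    by (intro Bochner_Integration.integral_cong) auto
  also have "\<dots> = integral\<^sup>L (distr M lborel Z) g"
    by (rule integral_distr[symmetric, OF Zm' gm])
  also have "\<dots> = integral\<^sup>L (uniform_measure lborel {0..\<theta>}) (qcfs T \<theta> \<psi>)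
       - integral\<^sup>L (uniform_measure lborel {0..\<theta>}) (qcfs Tt \<theta> \<psi>)"
    unfolding D g_def
    by (rule Bochner_Integration.integral_diff)
       (rule qcfs_integrable[OF assms(3)], simp add: assms)+
  also have "\<dots> = 0"
    unfolding psi using qcfs_integral[OF assms(3) assms(1)] qcfs_integral[OF assms(3) assms(2)] by simp
  finally show "expectation (\<lambda>\<omega>. snn_rate T \<theta> \<psi> (Ivec \<omega>) - qcfs Tt \<theta> \<psi> (Z \<omega>)) = 0" .
qed

end
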